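(* Let $(p_i)$ be a generic sequence in $\mathbb{RP}^2$ with normalised lift $(e_i)$, $e_{i+3}=a_i(e_{i+1}+e_i)+b_ie_{i+2}$, and let $\tilde p_i=(p_i,p_{i+1})\cap(p_{i+2},p_{i+3})$ be the image sequence under the pentagram map. Then a lift of $(\tilde p_i)$ of the form $\tilde e_i=\alpha_i(e_i+e_{i+1})$ satisfies the normalisation $\tilde e_{i+3}=\tilde a_i(\tilde e_{i+1}+\tilde e_i)+\tilde b_i\tilde e_{i+2}$ if and only if $\alpha_i=c\,\frac{a_i}{b_i+1}$ for a nonzero constant $c$, and in that case $$\tilde a_i=\frac{a_{i+3}(b_{i+1}+1)}{b_{i+3}+1},\qquad \tilde b_i=\frac{b_i(b_{i+1}+1)(b_{i+2}+1)\,a_{i+3}}{(b_i+1)(b_{i+3}+1)\,a_{i+2}}.$$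
   Context: Genericity means all points and intersections involved are well defined, consecutive triples of vectors are linearly independent, and $b_i\neq-1$. $(p,q)$ denotes the line through $p$ and $q$. A lift $(e_i)$ is normalised if there are scalars $a_i,b_i$ with $e_{i+3}=a_i(e_{i+1}+e_i)+b_ie_{i+2}$ for all $i$. *)

theory Defs
  imports "HOL-Analysis.Analysis"
begin

text \<open>Points of RP^2 are represented by their lifts in real^3; a sequence is
indexed by the integers.\<close>

definition lin_indep3 :: "real^3 \<Rightarrow> real^3 \<Rightarrow> real^3 \<Rightarrow> bool" where
  "lin_indep3 x y z \<longleftrightarrow>
     (\<forall>u v w. u *\<^sub>R x + v *\<^sub>R y + w *\<^sub>R z = 0 \<longrightarrow> u = 0 \<and> v = 0 \<and> w = 0)"

definition normalised :: "(int \<Rightarrow> real^3) \<Rightarrow> (int \<Rightarrow> real) \<Rightarrow> (int \<Rightarrow> real) \<Rightarrow> bool" where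
  "normalised e a b \<longleftrightarrow>
     (\<forall>i. e (i + 3) = a i *\<^sub>R (e (i + 1) + e i) + b i *\<^sub>R e (i + 2))"

definition proj_line :: "real^3 \<Rightarrow> real^3 \<Rightarrow> (real^3) set" where
  "proj_line x y = span {x, y}"

definition lifts_pentagram_point :: "(int \<Rightarrow> real^3) \<Rightarrow> int \<Rightarrow> real^3 \<Rightarrow> bool" where
  "lifts_pentagram_point e i v \<longleftrightarrow>
     v \<noteq> 0 \<and> v \<in> proj_line (e i) (e (i + 1)) \<inter> proj_line (e (i + 2)) (e (i + 3))"

end

theory Submission
  imports Defs
begin

lemma span2_ex:
  fixes x p q :: "real^3"
  assumes "x \<in> span {p, q}"
  shows "\<exists>k l. x = k *\<^sub>R p + l *\<^sub>R q"
proof -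
  from assms obtain k where "x - k *\<^sub>R p \<in> span {q}"
    using span_insert[of p "{q}"] by auto
  then obtain l where "x - k *\<^sub>R p = l *\<^sub>R q"
    using span_singleton[of q] by auto
  then show ?thesis by (metis diff_add_cancel add.commute)
qed

lemma const_int:
  fixes c :: "int \<Rightarrow> real"
  assumes "\<forall>i. c (i + 1) = c i"
  shows "c i = c 0"
proof (induction i rule: int_induct[where k=0])
  case base then show ?case by simp
next
  case (step1 i) then show ?case using assms by simp
next
  case (step2 i) then show ?case using assms[rule_format, of "i - 1"] by simp
qed

lemma vec_decomp:
  fixes X Y Z E0 E4 :: "real^3"
  assumes a0: "a0 \<noteq> 0"
    and h0: "Z = a0 *\<^sub>R (X + E0) + b0 *\<^sub>R Y"
    and h4: "E4 = a1 *\<^sub>R (Y + X) + b1 *\<^sub>R Z"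
  shows "al3 *\<^sub>R (Z + E4) - (ta *\<^sub>R (al1 *\<^sub>R (X + Y) + al0 *\<^sub>R (E0 + X)) + tb *\<^sub>R (al2 *\<^sub>R (Y + Z)))
     = (al3 * a1 - ta * al1) *\<^sub>R X
       + (al3 * a1 - ta * al1 + ta * al0 * b0 / a0 - tb * al2) *\<^sub>R Y
       + (al3 * (1 + b1) - ta * al0 / a0 - tb * al2) *\<^sub>R Z"
proof -
  have e0: "E0 = (1/a0) *\<^sub>R (Z - b0 *\<^sub>R Y) - X"
    using h0 a0 by (simp add: algebra_simps)
  show ?thesis
    unfolding vec_eq_iff using a0
    by (simp add: h4 e0 field_simps)
qed

lemma alg_fwd:
  fixes al0 al1 al2 al3 a0 a1 b0 b1 ta tb :: real
  assumes nz: "al1 \<noteq> 0" "al3 \<noteq> 0" "a0 \<noteq> 0" "a1 \<noteq> 0" "b0 + 1 \<noteq> 0"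
    and u: "al3 * a1 - ta * al1 = 0"
    and v: "al3 * a1 - ta * al1 + ta * al0 * b0 / a0 - tb * al2 = 0"
    and w: "al3 * (1 + b1) - ta * al0 / a0 - tb * al2 = 0"
  shows "al1 * (b1 + 1) / a1 = al0 * (b0 + 1) / a0"
proof -
  have t: "ta = al3 * a1 / al1" using u nz by (simp add: field_simps)
  have "al3 * (1 + b1) = ta * al0 * (b0 + 1) / a0"
    using u v w nz by (simp add: field_simps)
  hence "al3 * (1 + b1) * al1 * a0 = al3 * a1 * al0 * (b0 + 1)"
    using t nz by (simp add: field_simps)
  hence "al3 * ((1 + b1) * al1 * a0) = al3 * (a1 * al0 * (b0 + 1))"
    by (simp add: algebra_simps)
  hence "(1 + b1) * al1 * a0 = a1 * al0 * (b0 + 1)" using nz by simp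
  thus ?thesis using nz by (simp add: field_simps)
qed

lemma alg_sol:
  fixes c a0 a1 a2 a3 b0 b1 b2 b3 ta tb :: real
  assumes nz: "c \<noteq> 0" "a0 \<noteq> 0" "a1 \<noteq> 0" "a2 \<noteq> 0" "a3 \<noteq> 0"
     "b0 + 1 \<noteq> 0" "b1 + 1 \<noteq> 0" "b2 + 1 \<noteq> 0" "b3 + 1 \<noteq> 0"
  defines "al0 \<equiv> c * a0 / (b0 + 1)" and "al1 \<equiv> c * a1 / (b1 + 1)"
    and "al2 \<equiv> c * a2 / (b2 + 1)" and "al3 \<equiv> c * a3 / (b3 + 1)"
  shows "(al3 * a1 - ta * al1 = 0 \<and>
          al3 * a1 - ta * al1 + ta * al0 * b0 / a0 - tb * al2 = 0 \<and>
          al3 * (1 + b1) - ta * al0 / a0 - tb * al2 = 0)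
     \<longleftrightarrow> (ta = a3 * (b1 + 1) / (b3 + 1) \<and>
          tb = b0 * (b1 + 1) * (b2 + 1) * a3 / ((b0 + 1) * (b3 + 1) * a2))"
proof
  assume H: "al3 * a1 - ta * al1 = 0 \<and>
          al3 * a1 - ta * al1 + ta * al0 * b0 / a0 - tb * al2 = 0 \<and>
          al3 * (1 + b1) - ta * al0 / a0 - tb * al2 = 0"
  have U: "ta * al1 = al3 * a1" using H by simp
  have "al1 \<noteq> 0" using nz unfolding al1_def by simp
  hence "ta = al3 * a1 / al1" using U by (simp add: field_simps)
  moreover have "al3 * a1 / al1 = a3 * (b1 + 1) / (b3 + 1)"
    unfolding al1_def al3_def using nz by (simp add: divide_simps)
  ultimately have T: "ta = a3 * (b1 + 1) / (b3 + 1)" by simp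
  have W: "tb * al2 = al3 * (1 + b1) - ta * al0 / a0" using H by simp
  have "tb = (al3 * (1 + b1) - ta * al0 / a0) / al2"
    using W nz unfolding al2_def by (simp add: field_simps)
  also have "\<dots> = b0 * (b1 + 1) * (b2 + 1) * a3 / ((b0 + 1) * (b3 + 1) * a2)"
    using nz unfolding T al0_def al1_def al2_def al3_def by (simp add: divide_simps) (simp add: algebra_simps)
  finally show "ta = a3 * (b1 + 1) / (b3 + 1) \<and>
          tb = b0 * (b1 + 1) * (b2 + 1) * a3 / ((b0 + 1) * (b3 + 1) * a2)" using T by simp
next
  assume H: "ta = a3 * (b1 + 1) / (b3 + 1) \<and>
          tb = b0 * (b1 + 1) * (b2 + 1) * a3 / ((b0 + 1) * (b3 + 1) * a2)"
  show "al3 * a1 - ta * al1 = 0 \<and>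
          al3 * a1 - ta * al1 + ta * al0 * b0 / a0 - tb * al2 = 0 \<and>
          al3 * (1 + b1) - ta * al0 / a0 - tb * al2 = 0"
  proof -
    have T: "ta = a3 * (b1 + 1) / (b3 + 1)" and B: "tb = b0 * (b1 + 1) * (b2 + 1) * a3 / ((b0 + 1) * (b3 + 1) * a2)"
      using H by auto
    show ?thesis
      using nz unfolding T B al0_def al1_def al2_def al3_def
      by (simp add: divide_simps) (simp add: algebra_simps)
  qed
qed

theorem mainTheorem5:
  fixes e :: "int \<Rightarrow> real^3" and a b \<alpha> :: "int \<Rightarrow> real"
  assumes indep: "\<forall>i. lin_indep3 (e i) (e (i + 1)) (e (i + 2))"
    and norm: "normalised e a b"
    and bne: "\<forall>i. b i \<noteq> -1"
    and lift: "\<forall>i. lifts_pentagram_point e i (\<alpha> i *\<^sub>R (e i + e (i + 1)))"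
  shows "((\<exists>ta tb. normalised (\<lambda>i. \<alpha> i *\<^sub>R (e i + e (i + 1))) ta tb)
            \<longleftrightarrow> (\<exists>c. c \<noteq> 0 \<and> (\<forall>i. \<alpha> i = c * a i / (b i + 1))))
         \<and> (\<forall>ta tb. normalised (\<lambda>i. \<alpha> i *\<^sub>R (e i + e (i + 1))) ta tb \<longrightarrow>
              (\<forall>i. ta i = a (i + 3) * (b (i + 1) + 1) / (b (i + 3) + 1)
                 \<and> tb i = b i * (b (i + 1) + 1) * (b (i + 2) + 1) * a (i + 3)
                          / ((b i + 1) * (b (i + 3) + 1) * a (i + 2))))"
proof -
  have N: "\<And>i. e (i + 3) = a i *\<^sub>R (e (i + 1) + e i) + b i *\<^sub>R e (i + 2)"
    using norm unfolding normalised_def by blast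
  have I0: "\<And>i u v w. u *\<^sub>R e i + v *\<^sub>R e (i + 1) + w *\<^sub>R e (i + 2) = 0 \<Longrightarrow> u = 0 \<and> v = 0 \<and> w = 0"
    using indep unfolding lin_indep3_def by blast
  have I: "\<And>i u v w. u *\<^sub>R e (i + 1) + v *\<^sub>R e (i + 2) + w *\<^sub>R e (i + 3) = 0 \<Longrightarrow> u = 0 \<and> v = 0 \<and> w = 0"
  proof -
    fix i u v w
    assume "u *\<^sub>R e (i + 1) + v *\<^sub>R e (i + 2) + w *\<^sub>R e (i + 3) = 0"
    moreover have ix: "i + 1 + 1 = i + 2" "i + 1 + 2 = i + 3" by simp_all
    ultimately show "u = 0 \<and> v = 0 \<and> w = 0" using I0[of u "i + 1" v w] unfolding ix by blast
  qed
  have bp: "\<And>i. b i + 1 \<noteq> 0" using bne by (metis add.commute add_eq_0_iff)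
  have nz: "\<And>i. \<alpha> i \<noteq> 0 \<and> a i \<noteq> 0"
  proof -
    fix i
    have v0: "\<alpha> i *\<^sub>R (e i + e (i + 1)) \<noteq> 0"
      and vs: "\<alpha> i *\<^sub>R (e i + e (i + 1)) \<in> span {e (i + 2), e (i + 3)}"
      using lift[rule_format, of i] unfolding lifts_pentagram_point_def proj_line_def by auto
    have al: "\<alpha> i \<noteq> 0" using v0 by auto
    moreover have "a i \<noteq> 0"
    proof
      assume a0: "a i = 0"
      obtain k l where kl: "\<alpha> i *\<^sub>R (e i + e (i + 1)) = k *\<^sub>R e (i + 2) + l *\<^sub>R e (i + 3)"
        using span2_ex[OF vs] by blast
      have "e (i + 3) = b i *\<^sub>R e (i + 2)" using N[of i] a0 by simp
      with kl have "\<alpha> i *\<^sub>R e i + \<alpha> i *\<^sub>R e (i + 1) + (- (k + l * b i)) *\<^sub>R e (i + 2) = 0"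
        by (simp add: algebra_simps)
      then show False using I0 al by blast
    qed
    ultimately show "\<alpha> i \<noteq> 0 \<and> a i \<noteq> 0" by simp
  qed
  have step: "\<And>i t s. ((\<lambda>i. \<alpha> i *\<^sub>R (e i + e (i + 1))) (i + 3) =
        t *\<^sub>R ((\<lambda>i. \<alpha> i *\<^sub>R (e i + e (i + 1))) (i + 1) + (\<lambda>i. \<alpha> i *\<^sub>R (e i + e (i + 1))) i)
        + s *\<^sub>R (\<lambda>i. \<alpha> i *\<^sub>R (e i + e (i + 1))) (i + 2))
     \<longleftrightarrow> (\<alpha> (i + 3) * a (i + 1) - t * \<alpha> (i + 1) = 0 \<and>
          \<alpha> (i + 3) * a (i + 1) - t * \<alpha> (i + 1) + t * \<alpha> i * b i / a i - s * \<alpha> (i + 2) = 0 \<and>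
          \<alpha> (i + 3) * (1 + b (i + 1)) - t * \<alpha> i / a i - s * \<alpha> (i + 2) = 0)"
  proof -
    fix i t s
    have h0: "e (i + 3) = a i *\<^sub>R (e (i + 1) + e i) + b i *\<^sub>R e (i + 2)" by (rule N)
    have h4: "e (i + 4) = a (i + 1) *\<^sub>R (e (i + 2) + e (i + 1)) + b (i + 1) *\<^sub>R e (i + 3)"
      using N[of "i + 1"] by (simp add: add.assoc add.commute)
    note D = vec_decomp[OF conjunct2[OF nz[of i]] h0 h4, of "\<alpha> (i + 3)" t "\<alpha> (i + 1)" "\<alpha> i" s "\<alpha> (i + 2)"]
    have idx: "i + 3 + 1 = i + 4" "i + 1 + 1 = i + 2" "i + 2 + 1 = i + 3" by simp_all
    let ?L = "\<alpha> (i + 3) *\<^sub>R (e (i + 3) + e (i + 4))"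
    let ?R = "t *\<^sub>R (\<alpha> (i + 1) *\<^sub>R (e (i + 1) + e (i + 2)) + \<alpha> i *\<^sub>R (e i + e (i + 1))) + s *\<^sub>R (\<alpha> (i + 2) *\<^sub>R (e (i + 2) + e (i + 3)))"
    have "(?L = ?R) \<longleftrightarrow> ?L - ?R = 0" by simp
    also have "\<dots> \<longleftrightarrow> (\<alpha> (i + 3) * a (i + 1) - t * \<alpha> (i + 1) = 0 \<and>
          \<alpha> (i + 3) * a (i + 1) - t * \<alpha> (i + 1) + t * \<alpha> i * b i / a i - s * \<alpha> (i + 2) = 0 \<and>
          \<alpha> (i + 3) * (1 + b (i + 1)) - t * \<alpha> i / a i - s * \<alpha> (i + 2) = 0)"
      unfolding D
    proof
      assume "(\<alpha> (i + 3) * a (i + 1) - t * \<alpha> (i + 1)) *\<^sub>R e (i + 1) +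
      (\<alpha> (i + 3) * a (i + 1) - t * \<alpha> (i + 1) + t * \<alpha> i * b i / a i - s * \<alpha> (i + 2)) *\<^sub>R e (i + 2) +
      (\<alpha> (i + 3) * (1 + b (i + 1)) - t * \<alpha> i / a i - s * \<alpha> (i + 2)) *\<^sub>R e (i + 3) = 0"
      from I[OF this] show "\<alpha> (i + 3) * a (i + 1) - t * \<alpha> (i + 1) = 0 \<and>
          \<alpha> (i + 3) * a (i + 1) - t * \<alpha> (i + 1) + t * \<alpha> i * b i / a i - s * \<alpha> (i + 2) = 0 \<and>
          \<alpha> (i + 3) * (1 + b (i + 1)) - t * \<alpha> i / a i - s * \<alpha> (i + 2) = 0" .
    qed simp
    finally show "?thesis i t s" by (simp add: idx)
  qed
  have key: "\<And>ta tb. normalised (\<lambda>i. \<alpha> i *\<^sub>R (e i + e (i + 1))) ta tb \<longleftrightarrow>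
     (\<forall>i. \<alpha> (i + 3) * a (i + 1) - ta i * \<alpha> (i + 1) = 0 \<and>
          \<alpha> (i + 3) * a (i + 1) - ta i * \<alpha> (i + 1) + ta i * \<alpha> i * b i / a i - tb i * \<alpha> (i + 2) = 0 \<and>
          \<alpha> (i + 3) * (1 + b (i + 1)) - ta i * \<alpha> i / a i - tb i * \<alpha> (i + 2) = 0)"
    unfolding normalised_def using step by presburger
  have fwd: "\<exists>c. c \<noteq> 0 \<and> (\<forall>i. \<alpha> i = c * a i / (b i + 1))"
    if H: "normalised (\<lambda>i. \<alpha> i *\<^sub>R (e i + e (i + 1))) ta tb" for ta tb
  proof -
    have K: "\<And>i. \<alpha> (i + 3) * a (i + 1) - ta i * \<alpha> (i + 1) = 0 \<and>
          \<alpha> (i + 3) * a (i + 1) - ta i * \<alpha> (i + 1) + ta i * \<alpha> i * b i / a i - tb i * \<alpha> (i + 2) = 0 \<and>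
          \<alpha> (i + 3) * (1 + b (i + 1)) - ta i * \<alpha> i / a i - tb i * \<alpha> (i + 2) = 0"
      using H key by blast
    define cc where "cc i = \<alpha> i * (b i + 1) / a i" for i
    have "\<forall>i. cc (i + 1) = cc i"
    proof
      fix i
      show "cc (i + 1) = cc i"
        unfolding cc_def
        apply (rule alg_fwd[of "\<alpha> (i+1)" "\<alpha> (i+3)" "a i" "a (i+1)" "b i" "ta i" "\<alpha> i" "tb i" "\<alpha> (i+2)" "b (i+1)"])
        using nz bp K[of i] by blast+
    qed
    hence C: "\<And>i. cc i = cc 0" using const_int by blast
    have "cc 0 \<noteq> 0" using nz[of 0] bp[of 0] unfolding cc_def by simp
    moreover have "\<forall>i. \<alpha> i = cc 0 * a i / (b i + 1)"
    proof
      fix i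
      have "cc 0 = \<alpha> i * (b i + 1) / a i" using C[of i] unfolding cc_def[of i] by simp
      thus "\<alpha> i = cc 0 * a i / (b i + 1)" using nz[of i] bp[of i] by (simp add: field_simps)
    qed
    ultimately show ?thesis by blast
  qed
  have sol: "\<And>c ta tb. c \<noteq> 0 \<Longrightarrow> (\<forall>i. \<alpha> i = c * a i / (b i + 1)) \<Longrightarrow>
      normalised (\<lambda>i. \<alpha> i *\<^sub>R (e i + e (i + 1))) ta tb \<longleftrightarrow>
      (\<forall>i. ta i = a (i + 3) * (b (i + 1) + 1) / (b (i + 3) + 1)
                 \<and> tb i = b i * (b (i + 1) + 1) * (b (i + 2) + 1) * a (i + 3)
                          / ((b i + 1) * (b (i + 3) + 1) * a (i + 2)))"
  proof -
    fix c ta tb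
    assume c: "c \<noteq> 0" and A: "\<forall>i. \<alpha> i = c * a i / (b i + 1)"
    have "\<And>i. (\<alpha> (i + 3) * a (i + 1) - ta i * \<alpha> (i + 1) = 0 \<and>
          \<alpha> (i + 3) * a (i + 1) - ta i * \<alpha> (i + 1) + ta i * \<alpha> i * b i / a i - tb i * \<alpha> (i + 2) = 0 \<and>
          \<alpha> (i + 3) * (1 + b (i + 1)) - ta i * \<alpha> i / a i - tb i * \<alpha> (i + 2) = 0)
       \<longleftrightarrow> (ta i = a (i + 3) * (b (i + 1) + 1) / (b (i + 3) + 1)
                 \<and> tb i = b i * (b (i + 1) + 1) * (b (i + 2) + 1) * a (i + 3)
                          / ((b i + 1) * (b (i + 3) + 1) * a (i + 2)))"
    proof -
      fix i
      have "\<alpha> i = c * a i / (b i + 1)" "\<alpha> (i+1) = c * a (i+1) / (b (i+1) + 1)"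
           "\<alpha> (i+2) = c * a (i+2) / (b (i+2) + 1)" "\<alpha> (i+3) = c * a (i+3) / (b (i+3) + 1)"
        using A by blast+
      note eqs = this
      show "?thesis i"
        unfolding eqs
        by (rule alg_sol) (use c nz bp in blast)+
    qed
    thus "?thesis c ta tb" using key by presburger
  qed
  show ?thesis
  proof (intro conjI iffI)
    assume "\<exists>ta tb. normalised (\<lambda>i. \<alpha> i *\<^sub>R (e i + e (i + 1))) ta tb"
    then show "\<exists>c. c \<noteq> 0 \<and> (\<forall>i. \<alpha> i = c * a i / (b i + 1))" using fwd by blast
  next
    assume "\<exists>c. c \<noteq> 0 \<and> (\<forall>i. \<alpha> i = c * a i / (b i + 1))"
    then obtain c where c: "c \<noteq> 0" "\<forall>i. \<alpha> i = c * a i / (b i + 1)" by blast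
    show "\<exists>ta tb. normalised (\<lambda>i. \<alpha> i *\<^sub>R (e i + e (i + 1))) ta tb"
      using sol[OF c, of "\<lambda>i. a (i + 3) * (b (i + 1) + 1) / (b (i + 3) + 1)"
        "\<lambda>i. b i * (b (i + 1) + 1) * (b (i + 2) + 1) * a (i + 3) / ((b i + 1) * (b (i + 3) + 1) * a (i + 2))"]
      by blast
  next
    show "\<forall>ta tb. normalised (\<lambda>i. \<alpha> i *\<^sub>R (e i + e (i + 1))) ta tb \<longrightarrow>
              (\<forall>i. ta i = a (i + 3) * (b (i + 1) + 1) / (b (i + 3) + 1)
                 \<and> tb i = b i * (b (i + 1) + 1) * (b (i + 2) + 1) * a (i + 3)
                          / ((b i + 1) * (b (i + 3) + 1) * a (i + 2)))"
    proof (rule allI, rule allI, rule impI)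
      fix ta tb
      assume H: "normalised (\<lambda>i. \<alpha> i *\<^sub>R (e i + e (i + 1))) ta tb"
      obtain c where c: "c \<noteq> 0" "\<forall>i. \<alpha> i = c * a i / (b i + 1)" using fwd[OF H] by blast
      from sol[OF c, of ta tb] H
      show "\<forall>i. ta i = a (i + 3) * (b (i + 1) + 1) / (b (i + 3) + 1)
                 \<and> tb i = b i * (b (i + 1) + 1) * (b (i + 2) + 1) * a (i + 3)
                          / ((b i + 1) * (b (i + 3) + 1) * a (i + 2))"
      by blast
    qed
  qed
qed

end
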